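(* Let $f^\pm\in C(B_1^\pm)$, $g\in C(T)$, let $0<\rho<1$, and let $u$ be a bounded viscosity subsolution of the flat problem (F). For $\varepsilon>0$ set $r_\varepsilon=(2\varepsilon\|u\|_{L^\infty(B_1)})^{1/2}$. Then for all sufficiently small $\varepsilon>0$ and every $0<r\le\rho-r_\varepsilon$, the upper $\varepsilon$-envelope $u^\varepsilon$ is a viscosity subsolution of $$\omega(x)F^\pm(D^2u^\varepsilon)=f^\pm_\varepsilon\ \text{ in }B_r^\pm,\qquad (u^\varepsilon)^+_{x_d}-(u^\varepsilon)^-_{x_d}=g_\varepsilon\ \text{ on }T_r=B_r\cap\{x_d=0\},$$ where $f^\pm_\varepsilon=f^\pm-\gamma_{f^\pm}(r_\varepsilon)$ and $g_\varepsilon=g-\gamma_g(r_\varepsilon)$.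
   Context: Flat setting: $x=(x',x_d)$, $B_r^\pm=B_r\cap\{\pm x_d>0\}$, $T=B_1\cap\{x_d=0\}$, $a\in(0,1)$ constant, $\omega(x)=|x_d|^a$; $F^\pm:S(d)\to\mathbb R$ satisfy $\lambda|N|\le F^\pm(M+N)-F^\pm(M)\le\Lambda|N|$ for all symmetric $M$ and $N\ge0$. Flat problem (F): $\omega F^\pm(D^2u)=f^\pm$ in $B_1^\pm$, $u^+_{x_d}-u^-_{x_d}=g$ on $T$. Viscosity subsolution of (F) (and analogously of the problem on $B_r$): $u\in USC$ such that for any $\varphi$ touching $u$ from above at $x_0$: if $x_0\in B^\pm$ and $\varphi$ is $C^2$ near $x_0$ then $\omega(x_0)F^\pm(D^2\varphi(x_0))\ge f^\pm(x_0)$; if $x_0$ lies on $\{x_d=0\}$ and $\varphi\in C^1(\overline{B^+_\delta(x_0)})\cap C^1(\overline{B^-_\delta(x_0)})$ then $\varphi^+_{x_d}(x_0)-\varphi^-_{x_d}(x_0)\ge g(x_0)$, with $\varphi^\pm=\varphi|_{B_\delta(x_0)\cap\{\pm x_d>0\}}$. Modulus of continuity: $\gamma_h(t)=\sup_{|x-y|\le t}|h(x)-h(y)|$. Upper $\varepsilon$-envelope in the $x'$-direction: for $y=(y',y_d)\in\overline{B_\rho}$, $u^\varepsilon(y)=\sup\{u(x',y_d)-\frac1\varepsilon|x'-y'|^2: (x',y_d)\in\overline{B_\rho}\}$. *)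

theory Defs
  imports "HOL-Analysis.Analysis"
begin

text \<open>Points of R^d are vectors x :: real^'d; a distinguished index k :: 'd plays the
role of the last coordinate x_d, the remaining coordinates form x'.\<close>

definition sym_mat :: "real^'d^'d \<Rightarrow> bool" where
  "sym_mat M \<longleftrightarrow> transpose M = M"

definition psd_mat :: "real^'d^'d \<Rightarrow> bool" where
  "psd_mat N \<longleftrightarrow> (\<forall>v. 0 \<le> v \<bullet> (N *v v))"

definition mat_norm :: "real^'d^'d \<Rightarrow> real" where
  "mat_norm N = onorm (\<lambda>v. N *v v)"

definition uniformly_elliptic :: "real \<Rightarrow> real \<Rightarrow> (real^'d^'d \<Rightarrow> real) \<Rightarrow> bool" where
  "uniformly_elliptic lam Lam F \<longleftrightarrow>
     (\<forall>M N. sym_mat M \<longrightarrow> sym_mat N \<longrightarrow> psd_mat N \<longrightarrow>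
        lam * mat_norm N \<le> F (M + N) - F M \<and> F (M + N) - F M \<le> Lam * mat_norm N)"

definition usc_on :: "('a::metric_space) set \<Rightarrow> ('a \<Rightarrow> real) \<Rightarrow> bool" where
  "usc_on S u \<longleftrightarrow> (\<forall>x\<in>S. \<forall>e>0. \<exists>d>0. \<forall>y\<in>S. dist y x < d \<longrightarrow> u y < u x + e)"

definition upper_half :: "'d \<Rightarrow> (real^'d) set \<Rightarrow> (real^'d) set" where
  "upper_half k S = S \<inter> {x. x $ k > 0}"

definition lower_half :: "'d \<Rightarrow> (real^'d) set \<Rightarrow> (real^'d) set" where
  "lower_half k S = S \<inter> {x. x $ k < 0}"

definition flat_part :: "'d \<Rightarrow> (real^'d) set \<Rightarrow> (real^'d) set" where
  "flat_part k S = S \<inter> {x. x $ k = 0}"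

definition wt :: "real \<Rightarrow> 'd \<Rightarrow> real^'d \<Rightarrow> real" where
  "wt a k x = \<bar>x $ k\<bar> powr a"

definition touches_above :: "(real^'d) set \<Rightarrow> (real^'d \<Rightarrow> real) \<Rightarrow> (real^'d \<Rightarrow> real) \<Rightarrow> real^'d \<Rightarrow> bool" where
  "touches_above S phi u x0 \<longleftrightarrow> phi x0 = u x0 \<and>
     (\<exists>r>0. \<forall>x\<in>S \<inter> ball x0 r. u x \<le> phi x)"

definition C2_with :: "(real^'d \<Rightarrow> real) \<Rightarrow> real^'d \<Rightarrow> real \<Rightarrow> (real^'d \<Rightarrow> real^'d)
                        \<Rightarrow> (real^'d \<Rightarrow> real^'d^'d) \<Rightarrow> bool" where
  "C2_with phi x0 e G H \<longleftrightarrow> 0 < e \<and>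
     (\<forall>x\<in>ball x0 e. (phi has_derivative (\<lambda>h. G x \<bullet> h)) (at x) \<and>
                     (G has_derivative (\<lambda>h. H x *v h)) (at x)) \<and>
     continuous_on (ball x0 e) H"

text \<open>phi restricted to the half ball A (open) is C^1 up to the boundary, i.e. belongs to
C^1(closure A): phi is continuous on closure A, differentiable in A with gradient G, and G
extends continuously to closure A.  Then G x0 is the one-sided gradient at x0.\<close>
definition C1_closure_with :: "(real^'d \<Rightarrow> real) \<Rightarrow> (real^'d) set \<Rightarrow> (real^'d \<Rightarrow> real^'d) \<Rightarrow> bool" where
  "C1_closure_with phi A G \<longleftrightarrow>
     continuous_on (closure A) phi \<and> continuous_on (closure A) G \<and>
     (\<forall>x\<in>A. (phi has_derivative (\<lambda>h. G x \<bullet> h)) (at x))"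

text \<open>Right-hand sides are extended-real valued so that
f - gamma_f(t) makes sense when the modulus of continuity is infinite.\<close>
definition visc_sub ::
  "real \<Rightarrow> 'd \<Rightarrow> real \<Rightarrow> (real^'d^'d \<Rightarrow> real) \<Rightarrow> (real^'d^'d \<Rightarrow> real)
   \<Rightarrow> (real^'d \<Rightarrow> ereal) \<Rightarrow> (real^'d \<Rightarrow> ereal) \<Rightarrow> (real^'d \<Rightarrow> ereal) \<Rightarrow> (real^'d \<Rightarrow> real) \<Rightarrow> bool" where
  "visc_sub r k a Fp Fm fp fm g u \<longleftrightarrow>
     usc_on (ball 0 r) u \<and>
     (\<forall>phi x0 e G H. x0 \<in> upper_half k (ball 0 r) \<longrightarrow> touches_above (ball 0 r) phi u x0 \<longrightarrow>
         C2_with phi x0 e G H \<longrightarrow> ereal (wt a k x0 * Fp (H x0)) \<ge> fp x0) \<and>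
     (\<forall>phi x0 e G H. x0 \<in> lower_half k (ball 0 r) \<longrightarrow> touches_above (ball 0 r) phi u x0 \<longrightarrow>
         C2_with phi x0 e G H \<longrightarrow> ereal (wt a k x0 * Fm (H x0)) \<ge> fm x0) \<and>
     (\<forall>phi x0 d Gp Gm. x0 \<in> flat_part k (ball 0 r) \<longrightarrow> touches_above (ball 0 r) phi u x0 \<longrightarrow>
         0 < d \<longrightarrow> C1_closure_with phi (upper_half k (ball x0 d)) Gp \<longrightarrow>
         C1_closure_with phi (lower_half k (ball x0 d)) Gm \<longrightarrow>
         ereal (Gp x0 $ k - Gm x0 $ k) \<ge> g x0)"

definition modcont :: "(real^'d) set \<Rightarrow> (real^'d \<Rightarrow> real) \<Rightarrow> real \<Rightarrow> ereal" where
  "modcont S h t = (SUP p \<in> {(x, y). x \<in> S \<and> y \<in> S \<and> dist x y \<le> t}. ereal \<bar>h (fst p) - h (snd p)\<bar>)"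

definition envelope :: "'d \<Rightarrow> real \<Rightarrow> real \<Rightarrow> (real^'d \<Rightarrow> real) \<Rightarrow> real^'d \<Rightarrow> real" where
  "envelope k rho eps u y =
     Sup {u x - (norm (x - y))\<^sup>2 / eps | x. x \<in> cball 0 rho \<and> x $ k = y $ k}"

definition supnorm :: "(real^'d \<Rightarrow> real) \<Rightarrow> real" where
  "supnorm u = (SUP x \<in> ball 0 1. \<bar>u x\<bar>)"

end

theory Submission
  imports Defs
begin

lemma usc_lim:
  fixes u :: "'a::metric_space \<Rightarrow> real"
  assumes "usc_on S u" "\<And>n. x n \<in> S" "x \<longlonglongrightarrow> l" "l \<in> S" "a \<longlonglongrightarrow> c" "\<And>n. a n \<le> u (x n)"
  shows "c \<le> u l"
proof (rule ccontr)
  assume "\<not> c \<le> u l"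
  define e where "e = (c - u l) / 2"
  have e: "e > 0" using \<open>\<not> c \<le> u l\<close> by (simp add: e_def)
  obtain d where d: "d > 0" "\<And>y. y \<in> S \<Longrightarrow> dist y l < d \<Longrightarrow> u y < u l + e"
    using assms(1,4) e unfolding usc_on_def by blast
  have "eventually (\<lambda>n. dist (x n) l < d) sequentially"
    using assms(3) d(1) by (simp add: tendsto_iff)
  moreover have "eventually (\<lambda>n. a n > c - e) sequentially"
    using assms(5) e by (simp add: order_tendstoD(1))
  ultimately obtain n where "dist (x n) l < d" "a n > c - e"
    by (metis (mono_tags, lifting) eventually_conj_iff eventually_sequentially order.refl)
  then have "u (x n) < u l + e" "u (x n) > c - e" using d assms(2,6)[of n] by force+
  then show False by (simp add: e_def field_simps)
qed

lemma closed_slice: "closed {x :: real^'d. x $ k = c}"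
  by (intro closed_Collect_eq continuous_intros)

lemma env_upper:
  fixes u :: "real^'d \<Rightarrow> real"
  assumes "\<forall>x\<in>cball 0 rho. \<bar>u x\<bar> \<le> S" "eps > 0" "z \<in> cball 0 rho" "z $ k = y $ k"
  shows "u z - (norm (z - y))\<^sup>2 / eps \<le> envelope k rho eps u y"
  unfolding envelope_def
proof (rule cSup_upper)
  show "u z - (norm (z - y))\<^sup>2 / eps \<in> {u x - (norm (x - y))\<^sup>2 / eps |x. x \<in> cball 0 rho \<and> x $ k = y $ k}"
    using assms by blast
  show "bdd_above {u x - (norm (x - y))\<^sup>2 / eps |x. x \<in> cball 0 rho \<and> x $ k = y $ k}"
  proof (rule bdd_aboveI)
    fix t assume "t \<in> {u x - (norm (x - y))\<^sup>2 / eps |x. x \<in> cball 0 rho \<and> x $ k = y $ k}"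
    then obtain x where "x \<in> cball 0 rho" "t = u x - (norm (x - y))\<^sup>2 / eps" by blast
    moreover have "(norm (x - y))\<^sup>2 / eps \<ge> 0" using assms(2) by simp
    ultimately show "t \<le> S" using assms(1) by fastforce
  qed
qed

lemma env_max:
  fixes u :: "real^'d \<Rightarrow> real"
  assumes usc: "usc_on (ball 0 1) u" and rho1: "rho < 1"
    and bd: "\<forall>x\<in>ball 0 1. \<bar>u x\<bar> \<le> S" and eps: "eps > 0" and y: "y \<in> cball 0 rho"
  shows "\<exists>x\<in>cball 0 rho. x $ k = y $ k \<and> envelope k rho eps u y = u x - (norm (x - y))\<^sup>2 / eps"
proof -
  define K where "K = cball 0 rho \<inter> {x. x $ k = y $ k}"
  define h where "h x = u x - (norm (x - y))\<^sup>2 / eps" for x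
  have sub: "cball (0::real^'d) rho \<subseteq> ball 0 1" using rho1 by auto
  have bd': "\<forall>x\<in>cball 0 rho. \<bar>u x\<bar> \<le> S" using bd sub by blast
  have eq: "envelope k rho eps u y = Sup (h ` K)"
    unfolding envelope_def h_def K_def by (rule arg_cong[where f=Sup]) auto
  have yK: "y \<in> K" using y by (simp add: K_def)
  have up: "\<And>x. x \<in> K \<Longrightarrow> h x \<le> Sup (h ` K)"
  proof -
    fix x assume "x \<in> K"
    then have "h x \<le> envelope k rho eps u y"
      using env_upper[OF bd' eps, where z=x and y=y and k=k] unfolding K_def h_def by auto
    then show "h x \<le> Sup (h ` K)" using eq by simp
  qed
  have bdd: "bdd_above (h ` K)" using up by (intro bdd_aboveI[where M="Sup (h ` K)"]) auto
  have ne: "h ` K \<noteq> {}" using yK by blast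
  have "\<forall>n. \<exists>x\<in>K. h x > Sup (h ` K) - inverse (real (Suc n))"
  proof
    fix n
    have "Sup (h ` K) - inverse (real (Suc n)) < Sup (h ` K)" by simp
    then obtain t where "t \<in> h ` K" "Sup (h ` K) - inverse (real (Suc n)) < t"
      using less_cSupE[OF _ ne] by blast
    then show "\<exists>x\<in>K. h x > Sup (h ` K) - inverse (real (Suc n))" by blast
  qed
  then obtain f where f: "\<And>n. f n \<in> K" "\<And>n. h (f n) > Sup (h ` K) - inverse (real (Suc n))"
    by metis
  have cK: "compact K" unfolding K_def
    by (intro compact_Int_closed closed_slice compact_cball)
  obtain l r where l: "l \<in> K" "strict_mono (r :: nat \<Rightarrow> nat)" "(f \<circ> r) \<longlonglongrightarrow> l"
    using seq_compactE[OF compact_imp_seq_compact[OF cK], of f] f(1) by blast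
  have lim1: "(\<lambda>n. inverse (real (Suc (r n)))) \<longlonglongrightarrow> 0"
    using LIMSEQ_subseq_LIMSEQ[OF LIMSEQ_inverse_real_of_nat l(2)] by (simp add: o_def)
  have lim2: "(\<lambda>n. (norm (f (r n) - y))\<^sup>2 / eps) \<longlonglongrightarrow> (norm (l - y))\<^sup>2 / eps"
    using l(3) eps by (intro tendsto_intros) (auto simp add: o_def)
  have lim: "(\<lambda>n. Sup (h ` K) - inverse (real (Suc (r n))) + (norm (f (r n) - y))\<^sup>2 / eps)
       \<longlonglongrightarrow> Sup (h ` K) - 0 + (norm (l - y))\<^sup>2 / eps"
    by (intro tendsto_intros lim1 lim2)
  have "Sup (h ` K) - 0 + (norm (l - y))\<^sup>2 / eps \<le> u l"
  proof (rule usc_lim[OF usc _ _ _ lim])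
    show "(f \<circ> r) n \<in> ball 0 1" for n
    proof -
      have "norm (f (r n)) \<le> rho" using f(1)[of "r n"] unfolding K_def by auto
      then show ?thesis using rho1 by simp
    qed
    show "l \<in> ball 0 1"
    proof -
      have "norm l \<le> rho" using l(1) unfolding K_def by auto
      then show ?thesis using rho1 by simp
    qed
    show "(f \<circ> r) \<longlonglongrightarrow> l" by (rule l(3))
    show "\<And>n. Sup (h ` K) - inverse (real (Suc (r n))) + (norm (f (r n) - y))\<^sup>2 / eps \<le> u ((f \<circ> r) n)"
    proof -
      fix n
      have "h (f (r n)) > Sup (h ` K) - inverse (real (Suc (r n)))" by (rule f(2))
      then show "Sup (h ` K) - inverse (real (Suc (r n))) + (norm (f (r n) - y))\<^sup>2 / eps \<le> u ((f \<circ> r) n)"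
        unfolding h_def o_def by linarith
    qed
  qed
  then have "h l \<ge> Sup (h ` K)" by (simp add: h_def)
  with up[OF l(1)] have "envelope k rho eps u y = h l" using eq by linarith
  then show ?thesis using l(1) unfolding K_def h_def by blast
qed

lemma env_usc:
  fixes u :: "real^'d \<Rightarrow> real"
  assumes usc: "usc_on (ball 0 1) u" and rho1: "rho < 1"
    and bd: "\<forall>x\<in>ball 0 1. \<bar>u x\<bar> \<le> S" and eps: "eps > 0"
  shows "usc_on (cball 0 rho) (envelope k rho eps u)"
  unfolding usc_on_def
proof (intro ballI allI impI)
  fix y :: "real^'d" and e :: real
  assume y: "y \<in> cball 0 rho" and e: "e > 0"
  define E where "E = envelope k rho eps u"
  have sub: "cball (0::real^'d) rho \<subseteq> ball 0 1" using rho1 by auto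
  have bd': "\<forall>x\<in>cball 0 rho. \<bar>u x\<bar> \<le> S" using bd sub by blast
  show "\<exists>d>0. \<forall>y'\<in>cball 0 rho. dist y' y < d \<longrightarrow> envelope k rho eps u y' < envelope k rho eps u y + e"
  proof (rule ccontr)
    assume neg: "\<not> ?thesis"
    have "\<forall>n. \<exists>y'\<in>cball 0 rho. dist y' y < inverse (real (Suc n)) \<and> E y' \<ge> E y + e"
    proof
      fix n
      have "inverse (real (Suc n)) > 0" by simp
      then show "\<exists>y'\<in>cball 0 rho. dist y' y < inverse (real (Suc n)) \<and> E y' \<ge> E y + e"
        using neg unfolding E_def by (meson not_le)
    qed
    then obtain yn where yn: "\<And>n. yn n \<in> cball 0 rho" "\<And>n. dist (yn n) y < inverse (real (Suc n))"
      "\<And>n. E (yn n) \<ge> E y + e" by metis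
    have "\<forall>n. \<exists>x\<in>cball 0 rho. x $ k = yn n $ k \<and> E (yn n) = u x - (norm (x - yn n))\<^sup>2 / eps"
      using env_max[OF usc rho1 bd eps yn(1)] unfolding E_def by blast
    then obtain xn where xn: "\<And>n. xn n \<in> cball 0 rho" "\<And>n. xn n $ k = yn n $ k"
      "\<And>n. E (yn n) = u (xn n) - (norm (xn n - yn n))\<^sup>2 / eps" by metis
    have ylim: "yn \<longlonglongrightarrow> y"
    proof -
      have "(\<lambda>n. dist (yn n) y) \<longlonglongrightarrow> 0"
      proof (rule tendsto_sandwich[of "\<lambda>n. 0" _ _ "\<lambda>n. inverse (real (Suc n))"])
        show "\<forall>\<^sub>F n in sequentially. 0 \<le> dist (yn n) y" by simp
        show "\<forall>\<^sub>F n in sequentially. dist (yn n) y \<le> inverse (real (Suc n))"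
          by (rule always_eventually) (meson yn(2) less_imp_le)
        show "(\<lambda>n. 0::real) \<longlonglongrightarrow> 0" by simp
        show "(\<lambda>n. inverse (real (Suc n))) \<longlonglongrightarrow> 0" by (rule LIMSEQ_inverse_real_of_nat)
      qed
      then show ?thesis using tendsto_dist_iff by blast
    qed
    obtain l r where l: "l \<in> cball 0 rho" "strict_mono (r :: nat \<Rightarrow> nat)" "(xn \<circ> r) \<longlonglongrightarrow> l"
      using seq_compactE[OF compact_imp_seq_compact[OF compact_cball], of xn] xn(1) by blast
    have ylim': "(yn \<circ> r) \<longlonglongrightarrow> y" by (rule LIMSEQ_subseq_LIMSEQ[OF ylim l(2)])
    have "(\<lambda>n. (xn \<circ> r) n $ k) \<longlonglongrightarrow> l $ k" using l(3) by (intro tendsto_intros)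
    moreover have "(\<lambda>n. (xn \<circ> r) n $ k) = (\<lambda>n. (yn \<circ> r) n $ k)" using xn(2) by auto
    moreover have "(\<lambda>n. (yn \<circ> r) n $ k) \<longlonglongrightarrow> y $ k" using ylim' by (intro tendsto_intros)
    ultimately have lk: "l $ k = y $ k" using LIMSEQ_unique by metis
    have lim: "(\<lambda>n. E y + e + (norm ((xn \<circ> r) n - (yn \<circ> r) n))\<^sup>2 / eps) \<longlonglongrightarrow> E y + e + (norm (l - y))\<^sup>2 / eps"
      using eps by (intro tendsto_intros l(3) ylim') auto
    have "E y + e + (norm (l - y))\<^sup>2 / eps \<le> u l"
    proof (rule usc_lim[OF usc _ _ _ lim])
      show "(xn \<circ> r) n \<in> ball 0 1" for n using xn(1)[of "r n"] sub by auto
      show "l \<in> ball 0 1" using l(1) sub by auto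
      show "(xn \<circ> r) \<longlonglongrightarrow> l" by (rule l(3))
      show "E y + e + (norm ((xn \<circ> r) n - (yn \<circ> r) n))\<^sup>2 / eps \<le> u ((xn \<circ> r) n)" for n
        using yn(3)[of "r n"] xn(3)[of "r n"] by simp
    qed
    moreover have "u l - (norm (l - y))\<^sup>2 / eps \<le> E y"
      unfolding E_def by (rule env_upper[OF bd' eps l(1) lk])
    ultimately show False using e by linarith
  qed
qed

lemma key:
  fixes u :: "real^'d \<Rightarrow> real"
  assumes usc: "usc_on (ball 0 1) u" and rho1: "rho < 1"
    and bd: "\<forall>x\<in>ball 0 1. \<bar>u x\<bar> \<le> S" and eps: "eps > 0"
    and re: "re = sqrt (2 * eps * S)" and r: "0 < r" "r \<le> rho - re"
    and x0: "x0 \<in> ball 0 r" and t: "touches_above (ball 0 r) phi (envelope k rho eps u) x0"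
  shows "\<exists>xs. norm xs < rho \<and> xs $ k = x0 $ k \<and> dist x0 xs \<le> re \<and>
     touches_above (ball 0 1) (\<lambda>z. phi ((x0 - xs) + z) + (norm (x0 - xs))\<^sup>2 / eps) u xs"
proof -
  define E where "E = envelope k rho eps u"
  have sub: "cball (0::real^'d) rho \<subseteq> ball 0 1" using rho1 by auto
  have bd': "\<forall>x\<in>cball 0 rho. \<bar>u x\<bar> \<le> S" using bd sub by blast
  have "\<bar>u 0\<bar> \<le> S" using bd by simp
  then have S0: "S \<ge> 0" by linarith
  have re0: "re \<ge> 0" using re S0 eps by simp
  have nx0: "norm x0 < r" using x0 by simp
  have x0c: "x0 \<in> cball 0 rho" using nx0 r re0 by simp
  obtain xs where xs: "xs \<in> cball 0 rho" "xs $ k = x0 $ k" "E x0 = u xs - (norm (xs - x0))\<^sup>2 / eps"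
    using env_max[OF usc rho1 bd eps x0c] unfolding E_def by blast
  have "u x0 - (norm (x0 - x0))\<^sup>2 / eps \<le> E x0"
    unfolding E_def by (rule env_upper[OF bd' eps x0c refl])
  then have "(norm (xs - x0))\<^sup>2 / eps \<le> u xs - u x0" using xs(3) by simp
  also have "\<dots> \<le> 2 * S"
  proof -
    have "\<bar>u xs\<bar> \<le> S" "\<bar>u x0\<bar> \<le> S" using bd' xs(1) x0c by auto
    then show ?thesis by linarith
  qed
  finally have "(norm (xs - x0))\<^sup>2 \<le> 2 * eps * S" using eps by (simp add: field_simps)
  then have dxs: "norm (xs - x0) \<le> re" unfolding re by (rule real_le_rsqrt)
  have dist0: "dist x0 xs \<le> re" using dxs by (simp add: dist_norm norm_minus_commute)
  have nxs: "norm xs < rho"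
  proof -
    have "norm xs \<le> norm x0 + norm (xs - x0)" by (metis add_diff_cancel_left' norm_triangle_sub add.commute)
    then show ?thesis using nx0 dxs r by linarith
  qed
  define c where "c = x0 - xs"
  have ck: "c $ k = 0" using xs(2) by (simp add: c_def)
  have nc: "norm c = norm (xs - x0)" by (simp add: c_def norm_minus_commute)
  obtain rt where rt: "rt > 0" "\<And>y. y \<in> ball 0 r \<inter> ball x0 rt \<Longrightarrow> E y \<le> phi y" "phi x0 = E x0"
    using t unfolding touches_above_def E_def by blast
  define r' where "r' = min rt (min (rho - norm xs) (r - norm x0))"
  have r'0: "r' > 0" using rt(1) nxs nx0 by (simp add: r'_def)
  have "touches_above (ball 0 1) (\<lambda>z. phi (c + z) + (norm c)\<^sup>2 / eps) u xs"
    unfolding touches_above_def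
  proof (intro conjI exI[of _ r'] ballI)
    show "phi (c + xs) + (norm c)\<^sup>2 / eps = u xs" using rt(3) xs(3) nc by (simp add: c_def)
    show "r' > 0" by (rule r'0)
    fix z assume z: "z \<in> ball 0 1 \<inter> ball xs r'"
    define y where "y = c + z"
    have dz: "norm (z - xs) < r'" using z by (simp add: dist_norm norm_minus_commute)
    have yx0: "y - x0 = z - xs" by (simp add: y_def c_def)
    have "norm y \<le> norm x0 + norm (y - x0)" by (metis add_diff_cancel_left' norm_triangle_sub add.commute)
    then have "norm y < r" using dz yx0 by (simp add: r'_def)
    moreover have "dist x0 y < rt"
    proof -
      have "dist x0 y = norm (z - xs)" using yx0 by (metis dist_norm norm_minus_commute)
      then show ?thesis using dz by (simp add: r'_def)
    qed
    ultimately have Ey: "E y \<le> phi y" using rt(2) by simp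
    have "norm z \<le> norm xs + norm (z - xs)" by (metis add_diff_cancel_left' norm_triangle_sub add.commute)
    then have zc: "z \<in> cball 0 rho" using dz by (simp add: r'_def)
    have zk: "z $ k = y $ k" using ck by (simp add: y_def)
    have "u z - (norm (z - y))\<^sup>2 / eps \<le> E y"
      unfolding E_def by (rule env_upper[OF bd' eps zc zk])
    moreover have "norm (z - y) = norm c" by (simp add: y_def)
    ultimately show "u z \<le> phi (c + z) + (norm c)\<^sup>2 / eps" using Ey by (simp add: y_def)
  qed
  then show ?thesis using nxs xs(2) dist0 unfolding c_def by blast
qed

lemma modcont_le:
  assumes "x \<in> S" "y \<in> S" "dist x y \<le> t"
  shows "ereal (h x) - modcont S h t \<le> ereal (h y)"
proof -
  have M: "ereal \<bar>h x - h y\<bar> \<le> modcont S h t"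
  proof -
    have "(x, y) \<in> {(x, y). x \<in> S \<and> y \<in> S \<and> dist x y \<le> t}" using assms by simp
    then have "ereal \<bar>h (fst (x,y)) - h (snd (x,y))\<bar> \<le> modcont S h t"
      unfolding modcont_def by (rule SUP_upper)
    then show ?thesis by simp
  qed
  show ?thesis
  proof (cases "modcont S h t")
    case (real m)
    then show ?thesis using M by simp
  next
    case PInf then show ?thesis by simp
  next
    case MInf then show ?thesis using M by simp
  qed
qed

lemma shift_deriv:
  assumes "(f has_derivative f') (at (c + z))"
  shows "((\<lambda>z. f (c + z) + K) has_derivative f') (at z)"
proof -
  have "((\<lambda>z. c + z) has_derivative (\<lambda>h. h)) (at z)"
    by (intro derivative_eq_intros) auto
  from has_derivative_compose[OF this assms] show ?thesis
    by (rule has_derivative_add_const)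
qed

lemma C2_shift:
  fixes phi :: "real^'d \<Rightarrow> real"
  assumes "C2_with phi x0 e G H"
  shows "C2_with (\<lambda>z. phi (c + z) + K) (x0 - c) e (\<lambda>z. G (c + z)) (\<lambda>z. H (c + z))"
  unfolding C2_with_def
proof (intro conjI ballI)
  show "0 < e" using assms by (simp add: C2_with_def)
  fix z assume "z \<in> ball (x0 - c) e"
  then have z: "c + z \<in> ball x0 e" by (simp add: dist_norm algebra_simps)
  show "((\<lambda>z. phi (c + z) + K) has_derivative (\<lambda>h. G (c + z) \<bullet> h)) (at z)"
    using assms z unfolding C2_with_def by (intro shift_deriv) blast
  have "(G has_derivative (\<lambda>h. H (c + z) *v h)) (at (c + z))"
    using assms z unfolding C2_with_def by blast
  from shift_deriv[where K=0, OF this] show "((\<lambda>z. G (c + z)) has_derivative (\<lambda>h. H (c + z) *v h)) (at z)"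
    by simp
next
  have "continuous_on (ball x0 e) H" using assms by (simp add: C2_with_def)
  moreover have "continuous_on (ball (x0 - c) e) (\<lambda>z. c + z)" by (intro continuous_intros)
  moreover have "(\<lambda>z. c + z) ` ball (x0 - c) e \<subseteq> ball x0 e" by (auto simp: dist_norm algebra_simps)
  ultimately show "continuous_on (ball (x0 - c) e) (\<lambda>z. H (c + z))"
    by (rule continuous_on_compose2)
qed

lemma C1_shift:
  fixes phi :: "real^'d \<Rightarrow> real"
  assumes "C1_closure_with phi A' G" "A' = (+) c ` A"
  shows "C1_closure_with (\<lambda>z. phi (c + z) + K) A (\<lambda>z. G (c + z))"
  unfolding C1_closure_with_def
proof (intro conjI ballI)
  have cl: "(\<lambda>z. c + z) ` closure A \<subseteq> closure A'"
    using assms(2) closure_translation[of c A] by simp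
  have ct: "continuous_on (closure A) (\<lambda>z. c + z)" by (intro continuous_intros)
  have "continuous_on (closure A) (\<lambda>z. phi (c + z))"
    using continuous_on_compose2[OF _ ct cl] assms(1) unfolding C1_closure_with_def by blast
  then show "continuous_on (closure A) (\<lambda>z. phi (c + z) + K)" by (intro continuous_intros)
  show "continuous_on (closure A) (\<lambda>z. G (c + z))"
    using continuous_on_compose2[OF _ ct cl] assms(1) unfolding C1_closure_with_def by blast
  fix z assume "z \<in> A"
  then have "c + z \<in> A'" using assms(2) by simp
  then show "((\<lambda>z. phi (c + z) + K) has_derivative (\<lambda>h. G (c + z) \<bullet> h)) (at z)"
    using assms(1) unfolding C1_closure_with_def by (intro shift_deriv) blast
qed

lemma half_shift:
  fixes c :: "real^'d"
  assumes "c $ k = 0"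
  shows "upper_half k (ball (c + xs) d) = (+) c ` upper_half k (ball xs d)"
    and "lower_half k (ball (c + xs) d) = (+) c ` lower_half k (ball xs d)"
proof -
  have *: "\<And>P. {y. P y} = (+) c ` {z. P (c + z)}"
    by (auto intro!: image_eqI[where x="x - c" for x])
  have d: "\<And>z. dist (c + xs) (c + z) = dist xs z" by (simp add: dist_norm)
  show "upper_half k (ball (c + xs) d) = (+) c ` upper_half k (ball xs d)"
    unfolding upper_half_def ball_def Int_def mem_Collect_eq using *[of "\<lambda>y. dist (c + xs) y < d \<and> y $ k > 0"]
    by (simp add: d assms)
  show "lower_half k (ball (c + xs) d) = (+) c ` lower_half k (ball xs d)"
    unfolding lower_half_def ball_def Int_def mem_Collect_eq using *[of "\<lambda>y. dist (c + xs) y < d \<and> y $ k < 0"]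
    by (simp add: d assms)
qed

lemma usc_on_subset: "usc_on T u \<Longrightarrow> S \<subseteq> T \<Longrightarrow> usc_on S u"
  unfolding usc_on_def by (meson subsetD)

theorem mainTheorem9:
  fixes k :: "'d::finite" and a lam Lam rho :: real
    and Fp Fm :: "real^'d^'d \<Rightarrow> real"
    and fp fm g u :: "real^'d \<Rightarrow> real"
  assumes a: "0 < a" "a < 1"
    and ell: "0 < lam" "lam \<le> Lam" "uniformly_elliptic lam Lam Fp" "uniformly_elliptic lam Lam Fm"
    and fpc: "continuous_on (upper_half k (ball 0 1)) fp"
    and fmc: "continuous_on (lower_half k (ball 0 1)) fm"
    and gc: "continuous_on (flat_part k (ball 0 1)) g"
    and rho: "0 < rho" "rho < 1"
    and ubd: "\<exists>M. \<forall>x\<in>ball 0 1. \<bar>u x\<bar> \<le> M"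
    and usub: "visc_sub 1 k a Fp Fm (\<lambda>x. ereal (fp x)) (\<lambda>x. ereal (fm x)) (\<lambda>x. ereal (g x)) u"
  shows "\<exists>eps0>0. \<forall>eps. 0 < eps \<and> eps < eps0 \<longrightarrow>
           (let re = sqrt (2 * eps * supnorm u) in
            \<forall>r. 0 < r \<and> r \<le> rho - re \<longrightarrow>
              visc_sub r k a Fp Fm
                (\<lambda>x. ereal (fp x) - modcont (upper_half k (ball 0 1)) fp re)
                (\<lambda>x. ereal (fm x) - modcont (lower_half k (ball 0 1)) fm re)
                (\<lambda>x. ereal (g x) - modcont (flat_part k (ball 0 1)) g re)
                (envelope k rho eps u))"
proof -
  define S where "S = supnorm u"
  obtain M where M: "\<forall>x\<in>ball 0 1. \<bar>u x\<bar> \<le> M" using ubd by blast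
  have bd: "\<forall>x\<in>ball 0 1. \<bar>u x\<bar> \<le> S"
  proof
    fix x :: "real^'d" assume x: "x \<in> ball 0 1"
    have "bdd_above ((\<lambda>x. \<bar>u x\<bar>) ` ball 0 1)" using M by (intro bdd_aboveI[where M=M]) auto
    then show "\<bar>u x\<bar> \<le> S" unfolding S_def supnorm_def using x by (rule cSUP_upper2) simp
  qed
  have U: "usc_on (ball 0 1) u" using usub by (simp add: visc_sub_def)
  have UP: "\<And>phi x0 e G H. x0 \<in> upper_half k (ball 0 1) \<Longrightarrow> touches_above (ball 0 1) phi u x0 \<Longrightarrow>
         C2_with phi x0 e G H \<Longrightarrow> ereal (wt a k x0 * Fp (H x0)) \<ge> ereal (fp x0)"
    using usub unfolding visc_sub_def by blast
  have LO: "\<And>phi x0 e G H. x0 \<in> lower_half k (ball 0 1) \<Longrightarrow> touches_above (ball 0 1) phi u x0 \<Longrightarrow>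
         C2_with phi x0 e G H \<Longrightarrow> ereal (wt a k x0 * Fm (H x0)) \<ge> ereal (fm x0)"
    using usub unfolding visc_sub_def by blast
  have FL: "\<And>phi x0 d Gp Gm. x0 \<in> flat_part k (ball 0 1) \<Longrightarrow> touches_above (ball 0 1) phi u x0 \<Longrightarrow>
         0 < d \<Longrightarrow> C1_closure_with phi (upper_half k (ball x0 d)) Gp \<Longrightarrow>
         C1_closure_with phi (lower_half k (ball x0 d)) Gm \<Longrightarrow>
         ereal (Gp x0 $ k - Gm x0 $ k) \<ge> ereal (g x0)"
    using usub unfolding visc_sub_def by blast
  show ?thesis
  proof (intro exI[of _ 1] conjI allI impI, simp, unfold Let_def, intro allI impI)
    fix eps r :: real
    assume eps: "0 < eps \<and> eps < 1" and r: "0 < r \<and> r \<le> rho - sqrt (2 * eps * supnorm u)"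
    define re where "re = sqrt (2 * eps * S)"
    have eps0: "eps > 0" using eps by simp
    have r0: "0 < r" "r \<le> rho - re" using r by (simp_all add: re_def S_def)
    have "\<bar>u 0\<bar> \<le> S" using bd by simp
    then have re0: "re \<ge> 0" unfolding re_def using eps0 by simp
    have KEY: "\<And>x0 phi. x0 \<in> ball 0 r \<Longrightarrow> touches_above (ball 0 r) phi (envelope k rho eps u) x0 \<Longrightarrow>
      \<exists>xs. norm xs < rho \<and> xs $ k = x0 $ k \<and> dist x0 xs \<le> re \<and>
         touches_above (ball 0 1) (\<lambda>z. phi ((x0 - xs) + z) + (norm (x0 - xs))\<^sup>2 / eps) u xs"
      by (rule key[OF U rho(2) bd eps0 re_def r0]) auto
    show "visc_sub r k a Fp Fm
                (\<lambda>x. ereal (fp x) - modcont (upper_half k (ball 0 1)) fp (sqrt (2 * eps * supnorm u)))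
                (\<lambda>x. ereal (fm x) - modcont (lower_half k (ball 0 1)) fm (sqrt (2 * eps * supnorm u)))
                (\<lambda>x. ereal (g x) - modcont (flat_part k (ball 0 1)) g (sqrt (2 * eps * supnorm u)))
                (envelope k rho eps u)"
      unfolding visc_sub_def S_def[symmetric] re_def[symmetric]
    proof (intro conjI allI impI)
      show "usc_on (ball 0 r) (envelope k rho eps u)"
      proof (rule usc_on_subset[OF env_usc[OF U rho(2) bd eps0, of k]])
        show "ball 0 r \<subseteq> cball (0::real^'d) rho" using r0 re0 by auto
      qed
    next
      fix phi x0 e G H
      assume x0: "x0 \<in> upper_half k (ball 0 r)" and t: "touches_above (ball 0 r) phi (envelope k rho eps u) x0"
        and C: "C2_with phi x0 e G H"
      obtain xs where xs: "norm xs < rho" "xs $ k = x0 $ k" "dist x0 xs \<le> re"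
        "touches_above (ball 0 1) (\<lambda>z. phi ((x0 - xs) + z) + (norm (x0 - xs))\<^sup>2 / eps) u xs"
        using KEY[OF _ t] x0 unfolding upper_half_def by blast
      have C': "C2_with (\<lambda>z. phi ((x0 - xs) + z) + (norm (x0 - xs))\<^sup>2 / eps) xs e
          (\<lambda>z. G ((x0 - xs) + z)) (\<lambda>z. H ((x0 - xs) + z))"
        using C2_shift[OF C, of "x0 - xs"] by simp
      have xsU: "xs \<in> upper_half k (ball 0 1)" using xs(1,2) x0 rho by (simp add: upper_half_def)
      have x0U: "x0 \<in> upper_half k (ball 0 1)" using x0 r0 re0 rho by (auto simp: upper_half_def)
      have "ereal (wt a k xs * Fp (H ((x0 - xs) + xs))) \<ge> ereal (fp xs)"
        by (rule UP[OF xsU xs(4) C'])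
      moreover have "wt a k xs = wt a k x0" using xs(2) by (simp add: wt_def)
      moreover have "ereal (fp x0) - modcont (upper_half k (ball 0 1)) fp re \<le> ereal (fp xs)"
        by (rule modcont_le[OF x0U xsU xs(3)])
      ultimately have "ereal (fp xs) \<le> ereal (wt a k x0 * Fp (H x0))" by simp
      with \<open>ereal (fp x0) - _ \<le> ereal (fp xs)\<close> show "ereal (fp x0) - modcont (upper_half k (ball 0 1)) fp re \<le> ereal (wt a k x0 * Fp (H x0))"
        by (rule order.trans)
    next
      fix phi x0 e G H
      assume x0: "x0 \<in> lower_half k (ball 0 r)" and t: "touches_above (ball 0 r) phi (envelope k rho eps u) x0"
        and C: "C2_with phi x0 e G H"
      obtain xs where xs: "norm xs < rho" "xs $ k = x0 $ k" "dist x0 xs \<le> re"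
        "touches_above (ball 0 1) (\<lambda>z. phi ((x0 - xs) + z) + (norm (x0 - xs))\<^sup>2 / eps) u xs"
        using KEY[OF _ t] x0 unfolding lower_half_def by blast
      have C': "C2_with (\<lambda>z. phi ((x0 - xs) + z) + (norm (x0 - xs))\<^sup>2 / eps) xs e
          (\<lambda>z. G ((x0 - xs) + z)) (\<lambda>z. H ((x0 - xs) + z))"
        using C2_shift[OF C, of "x0 - xs"] by simp
      have xsU: "xs \<in> lower_half k (ball 0 1)" using xs(1,2) x0 rho by (simp add: lower_half_def)
      have x0U: "x0 \<in> lower_half k (ball 0 1)" using x0 r0 re0 rho by (auto simp: lower_half_def)
      have "ereal (wt a k xs * Fm (H ((x0 - xs) + xs))) \<ge> ereal (fm xs)"
        by (rule LO[OF xsU xs(4) C'])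
      moreover have "wt a k xs = wt a k x0" using xs(2) by (simp add: wt_def)
      moreover have "ereal (fm x0) - modcont (lower_half k (ball 0 1)) fm re \<le> ereal (fm xs)"
        by (rule modcont_le[OF x0U xsU xs(3)])
      ultimately have "ereal (fm xs) \<le> ereal (wt a k x0 * Fm (H x0))" by simp
      with \<open>ereal (fm x0) - _ \<le> ereal (fm xs)\<close> show "ereal (fm x0) - modcont (lower_half k (ball 0 1)) fm re \<le> ereal (wt a k x0 * Fm (H x0))"
        by (rule order.trans)
    next
      fix phi x0 d Gp Gm
      assume x0: "x0 \<in> flat_part k (ball 0 r)" and t: "touches_above (ball 0 r) phi (envelope k rho eps u) x0"
        and d: "0 < d" and Cp: "C1_closure_with phi (upper_half k (ball x0 d)) Gp"
        and Cm: "C1_closure_with phi (lower_half k (ball x0 d)) Gm"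
      obtain xs where xs: "norm xs < rho" "xs $ k = x0 $ k" "dist x0 xs \<le> re"
        "touches_above (ball 0 1) (\<lambda>z. phi ((x0 - xs) + z) + (norm (x0 - xs))\<^sup>2 / eps) u xs"
        using KEY[OF _ t] x0 unfolding flat_part_def by blast
      define c where "c = x0 - xs"
      have ck: "c $ k = 0" using xs(2) by (simp add: c_def)
      have x0e: "x0 = c + xs" by (simp add: c_def)
      have Cp': "C1_closure_with (\<lambda>z. phi (c + z) + (norm c)\<^sup>2 / eps) (upper_half k (ball xs d)) (\<lambda>z. Gp (c + z))"
        by (rule C1_shift[OF Cp]) (subst x0e, rule half_shift(1)[OF ck])
      have Cm': "C1_closure_with (\<lambda>z. phi (c + z) + (norm c)\<^sup>2 / eps) (lower_half k (ball xs d)) (\<lambda>z. Gm (c + z))"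
        by (rule C1_shift[OF Cm]) (subst x0e, rule half_shift(2)[OF ck])
      have xsU: "xs \<in> flat_part k (ball 0 1)" using xs(1,2) x0 rho by (simp add: flat_part_def)
      have x0U: "x0 \<in> flat_part k (ball 0 1)" using x0 r0 re0 rho by (auto simp: flat_part_def)
      have "ereal (Gp (c + xs) $ k - Gm (c + xs) $ k) \<ge> ereal (g xs)"
        by (rule FL[OF xsU xs(4)[folded c_def] d Cp' Cm'])
      then have "ereal (g xs) \<le> ereal (Gp x0 $ k - Gm x0 $ k)" using x0e by simp
      moreover have "ereal (g x0) - modcont (flat_part k (ball 0 1)) g re \<le> ereal (g xs)"
        by (rule modcont_le[OF x0U xsU xs(3)])
      ultimately show "ereal (g x0) - modcont (flat_part k (ball 0 1)) g re \<le> ereal (Gp x0 $ k - Gm x0 $ k)"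
        by (rule order.trans[rotated])
    qed
  qed
qed

end
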